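(* Let $N=\{1,\dots,n\}$ and let $F:2^N\to\mathbb{R}$ be quasi-submodular. Let $X_1=\{i\in N: F(i\mid N-i)>0\}$ and $Y_1=\{i\in N: F(i\mid\emptyset)\ge 0\}$. Then every global maximizer of $F$ lies in $[X_1,Y_1]$, i.e., for every $X_*\in\arg\max_{X\subseteq N}F(X)$, $X_1\subseteq X_*\subseteq Y_1$.
   Context: For $A\subseteq N$ and $i\in N$, write $A+i=A\cup\{i\}$, $A-i=A\setminus\{i\}$, and $F(i\mid A)=F(A+i)-F(A)$. $F$ is quasi-submodular if for all $X,Y\subseteq N$ both hold: $F(X\cap Y)\ge F(X)\Rightarrow F(Y)\ge F(X\cup Y)$, and $F(X\cap Y)>F(X)\Rightarrow F(Y)>F(X\cup Y)$. $[A,B]=\{U: A\subseteq U\subseteq B\}$. *)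

theory Defs
  imports Complex_Main
begin

definition marg :: "('a set \<Rightarrow> real) \<Rightarrow> 'a \<Rightarrow> 'a set \<Rightarrow> real" where
  "marg F i A = F (insert i A) - F A"

definition quasi_submodular :: "'a set \<Rightarrow> ('a set \<Rightarrow> real) \<Rightarrow> bool" where
  "quasi_submodular N F \<longleftrightarrow>
     (\<forall>X Y. X \<subseteq> N \<longrightarrow> Y \<subseteq> N \<longrightarrow>
        (F (X \<inter> Y) \<ge> F X \<longrightarrow> F Y \<ge> F (X \<union> Y)) \<and>
        (F (X \<inter> Y) > F X \<longrightarrow> F Y > F (X \<union> Y)))"

end

theory Submission
  imports Defs
begin

theorem lemma7:
  fixes n :: nat and F :: "nat set \<Rightarrow> real"
  defines "N \<equiv> {1..n}"
  assumes qs: "quasi_submodular N F"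
    and Xs_sub: "Xs \<subseteq> N"
    and Xs_max: "\<forall>X. X \<subseteq> N \<longrightarrow> F X \<le> F Xs"
  shows "{i \<in> N. marg F i (N - {i}) > 0} \<subseteq> Xs \<and> Xs \<subseteq> {i \<in> N. marg F i {} \<ge> 0}"
proof
  show "{i \<in> N. marg F i (N - {i}) > 0} \<subseteq> Xs"
  proof
    fix i assume "i \<in> {i \<in> N. marg F i (N - {i}) > 0}"
    hence iN: "i \<in> N" and m: "F (insert i (N - {i})) > F (N - {i})" by (auto simp: marg_def)
    have ins: "insert i (N - {i}) = N" using iN by auto
    show "i \<in> Xs"
    proof (rule ccontr)
      assume ni: "i \<notin> Xs"
      have 1: "insert i Xs \<inter> (N - {i}) = Xs" using ni Xs_sub by auto
      have 2: "insert i Xs \<union> (N - {i}) = N" using iN Xs_sub by auto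
      have "F (insert i Xs) \<le> F Xs" using Xs_max iN Xs_sub by auto
      hence "F (N - {i}) \<ge> F N"
        using qs[unfolded quasi_submodular_def, rule_format, of "insert i Xs" "N - {i}"] 1 2 iN Xs_sub by auto
      thus False using m ins by auto
    qed
  qed
next
  show "Xs \<subseteq> {i \<in> N. marg F i {} \<ge> 0}"
  proof
    fix i assume iX: "i \<in> Xs"
    hence iN: "i \<in> N" using Xs_sub by auto
    have "F {i} \<ge> F {}"
    proof (rule ccontr)
      assume "\<not> F {i} \<ge> F {}"
      hence lt: "F ({i} \<inter> (Xs - {i})) > F {i}" by auto
      have "{i} \<union> (Xs - {i}) = Xs" using iX by auto
      hence "F (Xs - {i}) > F Xs"
        using qs[unfolded quasi_submodular_def, rule_format, of "{i}" "Xs - {i}"] lt iN Xs_sub by auto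
      thus False using Xs_max Xs_sub by (metis Diff_subset dual_order.trans not_le)
    qed
    thus "i \<in> {i \<in> N. marg F i {} \<ge> 0}" using iN by (auto simp: marg_def)
  qed
qed

end
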